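(* Let $n \ge 16$ be an integer and let $p$ be a real number with $1/n \le p \le 1/4$. Let $X$ be a binomially distributed random variable with parameters $n$ and $p$. Then $\Pr\big[X \le pn - \sqrt{pn}/2\big] \ge 3/160$. *)

theory Defs
  imports "HOL-Probability.Probability"
begin

end

theory Submission
  imports Defs
begin


definition bp :: "nat \<Rightarrow> real \<Rightarrow> nat \<Rightarrow> real" where
  "bp n p k = real (n choose k) * p^k * (1-p)^(n-k)"

definition ff :: "real \<Rightarrow> nat \<Rightarrow> real" where
  "ff x r = (\<Prod>i<r. (x - real i))"

lemma ff_0[simp]: "ff x 0 = 1" by (simp add: ff_def)
lemma ff_Suc: "ff x (Suc r) = x * ff (x - 1) r"
  unfolding ff_def prod.lessThan_Suc_shift by (simp add: algebra_simps)

lemma ff_1[simp]: "ff x (Suc 0) = x" by (simp add: ff_def)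
lemma ff_vals: "ff x 1 = x" "ff x 2 = x*(x-1)" "ff x 3 = x*(x-1)*(x-2)"
  "ff x 4 = x*(x-1)*(x-2)*(x-3)"
  by (simp_all add: ff_def eval_nat_numeral algebra_simps)

lemma bp_sum: "(\<Sum>k\<le>n. bp n p k) = 1"
proof -
  have "(\<Sum>k\<le>n. bp n p k) = (p + (1 - p)) ^ n"
    by (subst binomial_ring) (simp add: atLeast0AtMost bp_def)
  thus ?thesis by simp
qed

lemma fact_moment: "(\<Sum>k\<le>n. ff (real k) r * bp n p k) = ff (real n) r * p^r"
proof (induction r arbitrary: n)
  case 0
  then show ?case using bp_sum by simp
next
  case (Suc r)
  show ?case
  proof (cases n)
    case 0
    then show ?thesis by (simp add: ff_Suc)
  next
    case (Suc n')
    have "(\<Sum>k\<le>n. ff (real k) (Suc r) * bp n p k)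
        = ff 0 (Suc r) * bp n p 0 + (\<Sum>j\<le>n'. ff (real (Suc j)) (Suc r) * bp n p (Suc j))"
      unfolding Suc sum.atMost_Suc_shift by simp
    also have "\<dots> = (\<Sum>j\<le>n'. real (Suc n') * p * (ff (real j) r * bp n' p j))"
    proof -
      have "ff (real (Suc j)) (Suc r) * bp n p (Suc j) = real (Suc n') * p * (ff (real j) r * bp n' p j)" for j
      proof -
        have c: "real (Suc j) * real (Suc n' choose Suc j) = real (Suc n') * real (n' choose j)"
          using Suc_times_binomial[of j n'] by (metis of_nat_mult)
        have "ff (real (Suc j)) (Suc r) * bp n p (Suc j) =
            (real (Suc j) * real (Suc n' choose Suc j)) * ff (real j) r * p^(Suc j) * (1-p)^(n'-j)"
          by (simp add: ff_Suc bp_def Suc)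
        also have "\<dots> = real (Suc n') * p * (ff (real j) r * bp n' p j)"
          unfolding c by (simp add: bp_def)
        finally show ?thesis .
      qed
      moreover have "ff 0 (Suc r) = 0" by (simp add: ff_Suc)
      ultimately show ?thesis by (simp del: of_nat_Suc)
    qed
    also have "\<dots> = real (Suc n') * p * (ff (real n') r * p^r)"
      by (simp add: sum_distrib_left[symmetric] Suc.IH)
    also have "\<dots> = ff (real n) (Suc r) * p ^ Suc r"
      by (simp add: ff_Suc Suc)
    finally show ?thesis .
  qed
qed

lemma fm_c: "(\<Sum>k\<le>n. c * ff (real k) r * bp n p k) = c * (ff (real n) r * p^r)"
  using fact_moment[where n=n and r=r and p=p] by (simp add: sum_distrib_left[symmetric] mult.assoc)

lemma mom1: "(\<Sum>k\<le>n. (real n * p - real k) * bp n p k) = 0"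
proof -
  have "(\<Sum>k\<le>n. (real n * p - real k) * bp n p k) =
     (\<Sum>k\<le>n. (real n * p) * ff (real k) 0 * bp n p k + (-1) * ff (real k) 1 * bp n p k)"
    by (intro sum.cong) (auto simp: ff_vals algebra_simps)
  also have "\<dots> = 0" unfolding sum.distrib fm_c by (simp add: ff_vals)
  finally show ?thesis .
qed

lemma mom2: "(\<Sum>k\<le>n. (real n * p - real k)^2 * bp n p k) = real n * p * (1-p)"
proof -
  define \<mu> where "\<mu> = real n * p"
  have "(\<Sum>k\<le>n. (\<mu> - real k)^2 * bp n p k) =
     (\<Sum>k\<le>n. 1 * ff (real k) 2 * bp n p k + (1 - 2*\<mu>) * ff (real k) 1 * bp n p k
       + \<mu>^2 * ff (real k) 0 * bp n p k)"
    by (intro sum.cong) (auto simp: ff_vals algebra_simps power2_eq_square)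
  also have "\<dots> = real n * p * (1-p)" unfolding sum.distrib fm_c
    by (simp add: ff_vals \<mu>_def algebra_simps power2_eq_square)
  finally show ?thesis by (simp add: \<mu>_def)
qed

lemma mom4: "(\<Sum>k\<le>n. (real n * p - real k)^4 * bp n p k) =
   real n * p * (1-p) * (1 + 3 * (real n - 2) * p * (1-p))"
proof -
  define \<mu> where "\<mu> = real n * p"
  have "(\<Sum>k\<le>n. (\<mu> - real k)^4 * bp n p k) =
     (\<Sum>k\<le>n. 1 * ff (real k) 4 * bp n p k + (6 - 4*\<mu>) * ff (real k) 3 * bp n p k
       + (7 - 12*\<mu> + 6*\<mu>^2) * ff (real k) 2 * bp n p k
       + (1 - 4*\<mu> + 6*\<mu>^2 - 4*\<mu>^3) * ff (real k) 1 * bp n p k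
       + \<mu>^4 * ff (real k) 0 * bp n p k)"
    by (intro sum.cong) (auto simp: ff_vals algebra_simps power2_eq_square power3_eq_cube power4_eq_xxxx)
  also have "\<dots> = real n * p * (1-p) * (1 + 3 * (real n - 2) * p * (1-p))" unfolding sum.distrib fm_c
    by (simp add: ff_vals \<mu>_def algebra_simps power2_eq_square power3_eq_cube power4_eq_xxxx)
  finally show ?thesis by (simp add: \<mu>_def)
qed

lemma bp_nonneg: "0 \<le> p \<Longrightarrow> p \<le> 1 \<Longrightarrow> 0 \<le> bp n p k"
  by (simp add: bp_def)

lemma bp_pos: "0 < p \<Longrightarrow> p < 1 \<Longrightarrow> k \<le> n \<Longrightarrow> 0 < bp n p k"
  by (simp add: bp_def)

lemma bp_ratio:
  assumes "k < n"
  shows "real (Suc k) * (1-p) * bp n p (Suc k) = real (n - k) * p * bp n p k"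
proof -
  have c: "Suc k * (n choose Suc k) = (n - k) * (n choose k)"
    using times_binomial_minus1_eq[of "Suc k" n] binomial_absorb_comp[of n k] by simp
  have c': "real (Suc k) * real (n choose Suc k) = real (n - k) * real (n choose k)"
    using c by (metis of_nat_mult)
  have e: "n - k = Suc (n - Suc k)" using assms by simp
  have "real (Suc k) * (1-p) * bp n p (Suc k) =
     (real (Suc k) * real (n choose Suc k)) * p^(Suc k) * (1-p)^(Suc (n - Suc k))"
    by (simp add: bp_def)
  also have "\<dots> = real (n - k) * p * bp n p k"
    unfolding c' bp_def e by (simp add: algebra_simps)
  finally show ?thesis .
qed

definition SS :: "nat \<Rightarrow> real \<Rightarrow> nat \<Rightarrow> real" where
  "SS n p j = (\<Sum>k\<le>j. (real n * p - real k) * bp n p k)"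

lemma SS_id: "j < n \<Longrightarrow> SS n p j = real (Suc j) * (1-p) * bp n p (Suc j)"
proof (induction j)
  case 0
  then show ?case using bp_ratio[of 0 n p] by (simp add: SS_def)
next
  case (Suc j)
  have "SS n p (Suc j) = SS n p j + (real n * p - real (Suc j)) * bp n p (Suc j)"
    by (simp add: SS_def)
  also have "\<dots> = (real n - real (Suc j)) * p * bp n p (Suc j)"
    using Suc by (simp add: algebra_simps)
  also have "\<dots> = real (Suc (Suc j)) * (1-p) * bp n p (Suc (Suc j))"
    using bp_ratio[of "Suc j" n p] Suc.prems by (simp add: of_nat_diff)
  finally show ?case .
qed

lemma SS_n: "SS n p n = 0"
  using mom1[of n p] by (simp add: SS_def)



lemma abs_sum:
  assumes p: "0 \<le> p" "p \<le> 1" and K: "K \<le> n" "real K \<le> real n * p" "real n * p < real K + 1"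
  shows "(\<Sum>k\<le>n. \<bar>real n * p - real k\<bar> * bp n p k) = 2 * SS n p K"
proof -
  define \<mu> where "\<mu> = real n * p"
  have split: "{..n} = {..K} \<union> {K<..n}" using K by auto
  have "(\<Sum>k\<le>n. \<bar>\<mu> - real k\<bar> * bp n p k) =
     (\<Sum>k\<le>K. \<bar>\<mu> - real k\<bar> * bp n p k) + (\<Sum>k\<in>{K<..n}. \<bar>\<mu> - real k\<bar> * bp n p k)"
    unfolding split by (subst sum.union_disjoint) auto
  also have "(\<Sum>k\<le>K. \<bar>\<mu> - real k\<bar> * bp n p k) = SS n p K"
    unfolding SS_def \<mu>_def[symmetric] using K by (intro sum.cong) (auto simp: \<mu>_def)
  also have "(\<Sum>k\<in>{K<..n}. \<bar>\<mu> - real k\<bar> * bp n p k) = - (\<Sum>k\<in>{K<..n}. (\<mu> - real k) * bp n p k)"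
  proof -
    have "(\<Sum>k\<in>{K<..n}. \<bar>\<mu> - real k\<bar> * bp n p k) = (\<Sum>k\<in>{K<..n}. - ((\<mu> - real k) * bp n p k))"
    proof (intro sum.cong refl)
      fix k assume "k \<in> {K<..n}"
      hence "real K + 1 \<le> real k" by auto
      hence "\<mu> - real k < 0" using K unfolding \<mu>_def by linarith
      thus "\<bar>\<mu> - real k\<bar> * bp n p k = - ((\<mu> - real k) * bp n p k)" by (simp add: algebra_simps)
    qed
    thus ?thesis by (simp add: sum_negf)
  qed
  also have "(\<Sum>k\<in>{K<..n}. (\<mu> - real k) * bp n p k) = SS n p n - SS n p K"
    unfolding SS_def \<mu>_def split by (subst sum.union_disjoint) auto
  finally show ?thesis using SS_n[of n p] by (simp add: \<mu>_def)
qed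

lemma e_poly: "(a::real) * (a - u)^2 * (a + 2*u) = a^4 - 3*u^2*a^2 + 2*u^3*a"
  by (simp add: power2_eq_square power3_eq_cube power4_eq_xxxx algebra_simps)
lemma pw_holder:
  fixes y u :: real assumes u: "u > 0"
  shows "y^2 \<le> (2*u/3) * \<bar>y\<bar> + y^4 / (3*u^2)"
proof -
  have a: "\<bar>y\<bar> \<ge> 0" by simp
  have "0 \<le> \<bar>y\<bar> * (\<bar>y\<bar> - u)^2 * (\<bar>y\<bar> + 2*u)" using a u by simp
  hence 1: "3*u^2*\<bar>y\<bar>^2 \<le> 2*u^3*\<bar>y\<bar> + \<bar>y\<bar>^4" unfolding e_poly by simp
  have 2: "(2*u/3) * \<bar>y\<bar> + \<bar>y\<bar>^4 / (3*u^2) = (2*u^3*\<bar>y\<bar> + \<bar>y\<bar>^4) / (3*u^2)"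
    using u by (simp add: field_simps power2_eq_square power3_eq_cube)
  have "\<bar>y\<bar>^2 = (3*u^2*\<bar>y\<bar>^2) / (3*u^2)" using u by simp
  also have "\<dots> \<le> (2*u^3*\<bar>y\<bar> + \<bar>y\<bar>^4) / (3*u^2)" using 1 u by (intro divide_right_mono) auto
  finally have "\<bar>y\<bar>^2 \<le> (2*u/3) * \<bar>y\<bar> + \<bar>y\<bar>^4 / (3*u^2)" using 2 by simp
  thus ?thesis by simp
qed

lemma abs_moment_lb:
  assumes p: "0 \<le> p" "p \<le> 1"
  shows "real n * p * (1-p) / sqrt (3 * (real n * p * (1-p)) + 1)
      \<le> (\<Sum>k\<le>n. \<bar>real n * p - real k\<bar> * bp n p k)"
proof -
  define \<sigma> where "\<sigma> = real n * p * (1-p)"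
  define A where "A = (\<Sum>k\<le>n. \<bar>real n * p - real k\<bar> * bp n p k)"
  define u where "u = sqrt (3*\<sigma> + 1)"
  have s0: "\<sigma> \<ge> 0" using p by (simp add: \<sigma>_def)
  have u0: "u > 0" using s0 by (simp add: u_def)
  have uu: "u^2 = 3*\<sigma>+1" using s0 by (simp add: u_def)
  have "\<sigma> = (\<Sum>k\<le>n. (real n * p - real k)^2 * bp n p k)" using mom2[of n p] by (simp add: \<sigma>_def)
  also have "\<dots> \<le> (\<Sum>k\<le>n. (2*u/3) * (\<bar>real n * p - real k\<bar> * bp n p k)
        + (real n * p - real k)^4 * bp n p k / (3*u^2))"
  proof (intro sum_mono)
    fix k assume "k \<in> {..n}"
    have b: "0 \<le> bp n p k" using bp_nonneg p by simp
    from mult_right_mono[OF pw_holder[OF u0, of "real n * p - real k"] b]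
    show "(real n * p - real k)^2 * bp n p k \<le> (2*u/3) * (\<bar>real n * p - real k\<bar> * bp n p k)
        + (real n * p - real k)^4 * bp n p k / (3*u^2)" by (simp add: algebra_simps)
  qed
  also have "\<dots> = (2*u/3) * A + (\<Sum>k\<le>n. (real n * p - real k)^4 * bp n p k) / (3*u^2)"
    by (simp add: sum.distrib sum_distrib_left sum_divide_distrib A_def)
  finally have main: "\<sigma> \<le> (2*u/3) * A + (\<Sum>k\<le>n. (real n * p - real k)^4 * bp n p k) / (3*u^2)" .
  have m4: "(\<Sum>k\<le>n. (real n * p - real k)^4 * bp n p k) \<le> \<sigma> + 3 * \<sigma>^2"
  proof -
    have "(\<Sum>k\<le>n. (real n * p - real k)^4 * bp n p k) = \<sigma> * (1 + 3 * (real n - 2) * p * (1-p))"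
      using mom4[of n p] by (simp add: \<sigma>_def)
    also have "\<dots> = \<sigma> + 3*\<sigma>^2 - 6 * \<sigma> * p * (1-p)"
      unfolding \<sigma>_def by (simp add: power2_eq_square algebra_simps)
    also have "\<dots> \<le> \<sigma> + 3*\<sigma>^2" using s0 p by simp
    finally show ?thesis .
  qed
  have "(\<Sum>k\<le>n. (real n * p - real k)^4 * bp n p k) / (3*u^2) \<le> (\<sigma> + 3 * \<sigma>^2) / (3*u^2)"
    using u0 m4 by (intro divide_right_mono) auto
  also have "(\<sigma> + 3 * \<sigma>^2) / (3*u^2) = \<sigma>/3" unfolding uu using s0
    by (simp add: field_simps power2_eq_square)
  finally have "\<sigma> \<le> 2 * u / 3 * A + \<sigma> / 3" using main by linarith
  moreover have "2 * u / 3 * A = (2/3) * (A * u)" by simp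
  ultimately have "\<sigma> \<le> A * u" by linarith
  hence "\<sigma> / u \<le> A" using pos_divide_le_eq[OF u0] by blast
  thus ?thesis by (simp only: \<sigma>_def A_def u_def)
qed




lemma SS_nonneg: "0 \<le> p \<Longrightarrow> p \<le> 1 \<Longrightarrow> k < n \<Longrightarrow> 0 \<le> SS n p k"
  using SS_id[of k n p] bp_nonneg[of p n "Suc k"] by simp

lemma SS_prod:
  assumes p: "0 < p" "p < 1" and mk: "m \<le> k" and kn: "k < n"
  shows "SS n p k \<le> SS n p m * exp (\<Sum>j=Suc m..k. (real n * p - real j) / (real j * (1-p)))"
  using mk kn
proof (induction k rule: dec_induct)
  case base
  then show ?case by simp
next
  case (step k)
  define x where "x = (real n * p - real (Suc k)) / (real (Suc k) * (1-p))"
  have kn: "k < n" using step by simp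
  have S0: "0 \<le> SS n p k" using SS_nonneg[of p k n] p kn by simp
  have c: "real (Suc k) * (1-p) \<noteq> 0" using p by simp
  have bpk: "bp n p (Suc k) = SS n p k / (real (Suc k) * (1-p))"
    unfolding SS_id[OF kn, of p] using nonzero_mult_div_cancel_left[OF c, of "bp n p (Suc k)"] by simp
  have "SS n p (Suc k) = SS n p k + (real n * p - real (Suc k)) * bp n p (Suc k)"
    by (simp add: SS_def)
  also have "\<dots> = SS n p k * (1 + x)" unfolding bpk x_def by (simp add: field_simps)
  also have "\<dots> \<le> SS n p k * exp x" using S0 by (intro mult_left_mono) auto
  also have "\<dots> \<le> SS n p m * exp (\<Sum>j=Suc m..k. (real n * p - real j) / (real j * (1-p))) * exp x"
    using step.IH kn by (intro mult_right_mono) auto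
  also have "\<dots> = SS n p m * exp (\<Sum>j=Suc m..Suc k. (real n * p - real j) / (real j * (1-p)))"
    using step.hyps by (simp add: sum.cl_ivl_Suc exp_add x_def)
  finally show ?case .
qed

lemma arith_sum:
  fixes \<mu> :: real
  shows "m \<le> K \<Longrightarrow> (\<Sum>j=Suc m..K. (\<mu> - real j)) = (real K - real m) * (2*\<mu> - real m - 1 - real K) / 2"
proof (induction K rule: dec_induct)
  case base
  then show ?case by simp
next
  case (step k)
  then show ?case by (simp add: sum.cl_ivl_Suc field_simps)
qed

lemma cs_step:
  assumes p: "0 < p" "p < 1" and n: "n \<ge> 1" and m: "m \<le> n" and S: "SS n p m > 0"
  shows "SS n p m ^ 2 \<le> (real n * p * (1-p)) * (\<Sum>k\<le>m. bp n p k)"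
proof -
  define \<sigma> where "\<sigma> = real n * p * (1-p)"
  define S where "S = SS n p m"
  define P where "P = (\<Sum>k\<le>m. bp n p k)"
  have s0: "\<sigma> > 0" using p n by (simp add: \<sigma>_def)
  define lam where "lam = \<sigma> / S"
  have l0: "lam > 0" using s0 S by (simp add: lam_def S_def)
  have pw: "y \<le> y^2 / (2*lam) + lam/2" for y :: real
  proof -
    have "0 \<le> (y - lam)^2" by simp
    hence "2*lam*y \<le> y^2 + lam^2" by (simp add: power2_eq_square algebra_simps)
    hence "2*lam*y / (2*lam) \<le> (y^2 + lam^2) / (2*lam)" using l0 by (intro divide_right_mono) auto
    also have "2*lam*y / (2*lam) = y" using l0 by simp
    also have "(y^2 + lam^2) / (2*lam) = y^2 / (2*lam) + lam/2" using l0
      by (simp add: add_divide_distrib power2_eq_square)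
    finally show ?thesis .
  qed
  have "S \<le> (\<Sum>k\<le>m. (real n * p - real k)^2 / (2*lam) * bp n p k + lam/2 * bp n p k)"
    unfolding S_def SS_def
  proof (intro sum_mono)
    fix k assume "k \<in> {..m}"
    have b: "0 \<le> bp n p k" using bp_nonneg p by simp
    from mult_right_mono[OF pw[of "real n * p - real k"] b]
    show "(real n * p - real k) * bp n p k \<le> (real n * p - real k)^2 / (2*lam) * bp n p k + lam/2 * bp n p k"
      by (simp add: distrib_right)
  qed
  also have "\<dots> = (\<Sum>k\<le>m. (real n * p - real k)^2 * bp n p k) / (2*lam) + lam/2 * P"
    by (simp add: sum.distrib sum_distrib_left sum_divide_distrib P_def)
  also have "(\<Sum>k\<le>m. (real n * p - real k)^2 * bp n p k) \<le> \<sigma>"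
  proof -
    have "(\<Sum>k\<le>m. (real n * p - real k)^2 * bp n p k) \<le> (\<Sum>k\<le>n. (real n * p - real k)^2 * bp n p k)"
      using m p by (intro sum_mono2) (auto intro!: mult_nonneg_nonneg bp_nonneg)
    thus ?thesis using mom2[of n p] by (simp add: \<sigma>_def)
  qed
  hence "(\<Sum>k\<le>m. (real n * p - real k)^2 * bp n p k) / (2*lam) \<le> \<sigma> / (2*lam)"
    using l0 by (intro divide_right_mono) auto
  finally have "S \<le> \<sigma> / (2*lam) + lam/2 * P" by simp
  also have "\<sigma> / (2*lam) = S/2" using s0 S by (simp add: lam_def S_def)
  finally have "S \<le> S/2 + \<sigma> / S / 2 * P" by (simp add: lam_def)
  hence "S * S \<le> (S/2 + \<sigma> / S / 2 * P) * S" using S S_def by (intro mult_right_mono) auto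
  also have "\<dots> = S*S/2 + \<sigma> * P / 2" using S S_def by (simp add: field_simps)
  finally have "S*S \<le> \<sigma> * P" by simp
  thus ?thesis by (simp only: power2_eq_square S_def \<sigma>_def P_def)
qed



lemma sq_step: "(0::real) \<le> x \<Longrightarrow> x \<le> a \<Longrightarrow> a * a \<le> b \<Longrightarrow> x^2 \<le> b"
  by (metis order_trans power2_eq_square mult_mono)

lemma exp_129: "exp (129/100::real) \<le> 37/10"
proof -
  define y :: real where "y = 129/6400"
  define x where "x = exp y"
  have x0: "0 \<le> x" by (simp add: x_def)
  have "exp (129/100::real) = exp y ^ 64" using exp_of_nat_mult[of 64 y] by (simp add: y_def)
  also have "\<dots> = (((((x^2)^2)^2)^2)^2)^2" by (simp add: x_def flip: power_mult)
  also have "\<dots> \<le> 37/10"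
  proof -
    have "x \<le> 1 + y + y^2" unfolding x_def by (rule exp_bound) (auto simp: y_def)
    also have "\<dots> \<le> 102057/100000" by (simp add: y_def power2_eq_square)
    finally have 1: "x \<le> 102057/100000" .
    have 2: "x^2 \<le> 104157/100000" by (rule sq_step[OF x0 1]) simp
    have 3: "(x^2)^2 \<le> 108487/100000" by (rule sq_step[OF _ 2]) simp_all
    have 4: "((x^2)^2)^2 \<le> 23539/20000" by (rule sq_step[OF _ 3]) simp_all
    have 5: "(((x^2)^2)^2)^2 \<le> 69261/50000" by (rule sq_step[OF _ 4]) simp_all
    have 6: "((((x^2)^2)^2)^2)^2 \<le> 47971/25000" by (rule sq_step[OF _ 5]) simp_all
    have 7: "(((((x^2)^2)^2)^2)^2)^2 \<le> 73639/20000" by (rule sq_step[OF _ 6]) simp_all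
    show ?thesis using 7 by simp
  qed
  finally show ?thesis .
qed

lemma exp_384: "exp (384/100::real) \<le> 160/3"
proof -
  define y :: real where "y = 3/100"
  define x where "x = exp y"
  have x0: "0 \<le> x" by (simp add: x_def)
  have "exp (384/100::real) = exp y ^ 128" using exp_of_nat_mult[of 128 y] by (simp add: y_def)
  also have "\<dots> = ((((((x^2)^2)^2)^2)^2)^2)^2" by (simp add: x_def flip: power_mult)
  also have "\<dots> \<le> 160/3"
  proof -
    have "x \<le> 1 + y + y^2" unfolding x_def by (rule exp_bound) (auto simp: y_def)
    also have "\<dots> \<le> 10309/10000" by (simp add: y_def power2_eq_square)
    finally have 1: "x \<le> 10309/10000" .
    have 2: "x^2 \<le> 26569/25000" by (rule sq_step[OF x0 1]) simp
    have 3: "(x^2)^2 \<le> 56473/50000" by (rule sq_step[OF _ 2]) simp_all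
    have 4: "((x^2)^2)^2 \<le> 7973/6250" by (rule sq_step[OF _ 3]) simp_all
    have 5: "(((x^2)^2)^2)^2 \<le> 10171/6250" by (rule sq_step[OF _ 4]) simp_all
    have 6: "((((x^2)^2)^2)^2)^2 \<le> 264831/100000" by (rule sq_step[OF _ 5]) simp_all
    have 7: "(((((x^2)^2)^2)^2)^2)^2 \<le> 140271/20000" by (rule sq_step[OF _ 6]) simp_all
    have 8: "((((((x^2)^2)^2)^2)^2)^2)^2 \<le> 4918989/100000" by (rule sq_step[OF _ 7]) simp_all
    show ?thesis using 8 by simp
  qed
  finally show ?thesis .
qed



lemma final_num:
  fixes s q :: real
  assumes s: "s \<ge> 8/5" and q: "3/4 \<le> q" "q \<le> 1" and e129: "exp (129/100::real) \<le> 37/10"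
  shows "3/160 \<le> (s^2*q) / (4*(3*(s^2*q)+1)) * exp (- ((s/2 + 1/2)^2 / ((s^2 - s/2) * q)))"
proof -
  have "s*(s-1/2) > 0" using s by (intro mult_pos_pos) auto
  moreover have "s^2 - s/2 = s*(s-1/2)" by (simp add: power2_eq_square algebra_simps)
  ultimately have d0: "s^2 - s/2 > 0" by simp
  have pos: "(s^2 - s/2) * q > 0" using d0 q by simp
  have "(s/2 + 1/2)^2 \<le> (129/100) * ((s^2 - s/2) * (3/4))"
  proof -
    define u where "u = s - 8/5"
    have u0: "u \<ge> 0" using s by (simp add: u_def)
    have "0 \<le> (7175/10000)*u^2 + (131225/100000)*u + 128/10000" using u0 by simp
    moreover have "(129/100) * ((s^2 - s/2) * (3/4)) - (s/2 + 1/2)^2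
        = (7175/10000)*u^2 + (131225/100000)*u + 128/10000"
      unfolding u_def power2_eq_square by (simp add: field_simps)
    ultimately show ?thesis by linarith
  qed
  also have "\<dots> \<le> (129/100) * ((s^2 - s/2) * q)" using d0 q by (intro mult_left_mono) auto
  finally have "(s/2 + 1/2)^2 / ((s^2 - s/2) * q) \<le> 129/100" using pos by (simp add: divide_le_eq)
  hence "exp (- (129/100)) \<le> exp (- ((s/2 + 1/2)^2 / ((s^2 - s/2) * q)))" by simp
  moreover have "10/37 \<le> exp (- (129/100::real))"
    using e129 by (simp add: exp_minus field_simps)
  ultimately have E: "10/37 \<le> exp (- ((s/2 + 1/2)^2 / ((s^2 - s/2) * q)))" by linarith
  have v: "s^2*q \<ge> 48/25"
  proof -
    have "(8/5::real)^2 \<le> s^2" using s by (intro power_mono) auto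
    hence "s^2 \<ge> 64/25" by (simp add: power2_eq_square)
    hence "s^2*q \<ge> 64/25 * (3/4)" using q by (intro mult_mono) auto
    thus ?thesis by simp
  qed
  have V: "48/169 \<le> (s^2*q) / (4*(3*(s^2*q)+1)) * 4"
    using v by (simp add: field_simps)
  have "(3::real)/160 \<le> (48/169/4) * (10/37)" by simp
  also have "\<dots> \<le> (s^2*q) / (4*(3*(s^2*q)+1)) * exp (- ((s/2 + 1/2)^2 / ((s^2 - s/2) * q)))"
    using V E v by (intro mult_mono) auto
  finally show ?thesis .
qed


lemma arith_bound:
  fixes \<mu> t :: real
  assumes "real m \<le> \<mu> - t" "\<mu> - t < real m + 1" "real K \<le> \<mu>" "\<mu> < real K + 1" "t \<ge> 1/2"
  shows "(real K - real m) * (2*\<mu> - real m - 1 - real K) / 2 \<le> (t + 1/2)^2 / 2"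
proof -
  define f where "f = \<mu> - real m - 1"
  define l where "l = \<mu> - real K"
  have e: "(real K - real m) * (2*\<mu> - real m - 1 - real K) = f^2 + f + (l - l^2)"
    unfolding f_def l_def by (simp add: power2_eq_square algebra_simps)
  have "0 \<le> (l - 1/2)^2" by simp
  hence "l - l^2 \<le> 1/4" by (simp add: power2_eq_square algebra_simps)
  moreover have "(f + 1/2)^2 \<le> (t + 1/2)^2"
    using assms by (intro power_mono) (auto simp: f_def)
  ultimately have "(real K - real m) * (2*\<mu> - real m - 1 - real K) \<le> (t + 1/2)^2"
    unfolding e by (simp add: power2_eq_square algebra_simps)
  thus ?thesis by simp
qed

theorem lemma1:
  fixes n :: nat and p :: real
  assumes "n \<ge> 16" and "1 / real n \<le> p" and "p \<le> 1 / 4"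
  shows "measure_pmf.prob (binomial_pmf n p)
           {k. real k \<le> p * real n - sqrt (p * real n) / 2} \<ge> 3 / 160"
proof -
  have n1: "n \<ge> 1" using assms(1) by simp
  have rn: "real n > 0" using n1 by simp
  have p0: "0 < p" using assms(2) rn by (meson less_le_trans zero_less_divide_1_iff)
  have p1: "p < 1" using assms(3) by simp
  define \<mu> where "\<mu> = real n * p"
  have mu1: "\<mu> \<ge> 1" using assms(2) rn by (simp add: \<mu>_def divide_le_eq mult.commute)
  have mun: "\<mu> \<le> real n / 4" using assms(3) rn by (simp add: \<mu>_def)
  define s where "s = sqrt \<mu>"
  have s2: "s^2 = \<mu>" using mu1 by (simp add: s_def)
  have s1: "s \<ge> 1" using mu1 by (simp add: s_def)
  define thr where "thr = \<mu> - s/2"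
  have "1 * s \<le> s * s" using s1 by (intro mult_right_mono) auto
  hence thr0: "thr \<ge> s/2" unfolding thr_def using s2 by (simp add: power2_eq_square)
  define m where "m = nat \<lfloor>thr\<rfloor>"
  have fz: "\<lfloor>thr\<rfloor> \<ge> 0" using thr0 s1 by simp
  have mr: "real m = real_of_int \<lfloor>thr\<rfloor>" unfolding m_def using fz by simp
  have m1: "real m \<le> thr" unfolding mr by (rule of_int_floor_le)
  have m2: "thr < real m + 1" unfolding mr by (rule real_of_int_floor_add_one_gt)
  have set: "{k. real k \<le> p * real n - sqrt (p * real n) / 2} = {..m}"
  proof -
    have "real k \<le> thr \<longleftrightarrow> k \<le> m" for k
    proof
      assume "real k \<le> thr"
      hence "real k < real m + 1" using m2 by linarith
      thus "k \<le> m" by simp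
    next
      assume "k \<le> m"
      thus "real k \<le> thr" using m1 by (meson of_nat_le_iff order_trans)
    qed
    moreover have "p * real n - sqrt (p * real n) / 2 = thr"
      by (simp add: thr_def \<mu>_def s_def mult.commute)
    ultimately show ?thesis by auto
  qed
  have P: "measure_pmf.prob (binomial_pmf n p) {k. real k \<le> p * real n - sqrt (p * real n) / 2}
      = (\<Sum>k\<le>m. bp n p k)"
    unfolding set using p0 p1 by (subst measure_measure_pmf_finite) (auto simp: bp_def)
  have mn: "m < n"
  proof -
    have "real m \<le> \<mu>" using m1 s1 unfolding thr_def by linarith
    also have "\<dots> < real n" using mun rn by linarith
    finally show ?thesis by simp
  qed
  have bpnn: "\<And>k. 0 \<le> bp n p k" using p0 p1 by (intro bp_nonneg) auto
  show ?thesis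
  proof (cases "\<mu> < 64/25")
    case True
    have "bp n p 0 \<le> (\<Sum>k\<le>m. bp n p k)"
      using bpnn by (intro member_le_sum) auto
    moreover have "bp n p 0 = (1-p)^n" by (simp add: bp_def)
    moreover have "(1-p)^n \<ge> 3/160"
    proof -
      have "(1-p)^n = exp (real n * ln (1-p))"
        using p1 by (simp add: exp_of_nat_mult)
      moreover have "real n * (- p - 2 * p^2) \<le> real n * ln (1-p)"
        using p0 assms(3) by (intro mult_left_mono ln_one_minus_pos_lower_bound) auto
      moreover have "- (384/100) \<le> real n * (- p - 2 * p^2)"
      proof -
        have "real n * (p + 2 * p^2) = \<mu> * (1 + 2*p)" by (simp add: \<mu>_def power2_eq_square algebra_simps)
        also have "\<dots> \<le> (64/25) * (3/2)"
          using True mu1 assms(3) p0 by (intro mult_mono) auto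
        finally show ?thesis by (simp add: algebra_simps)
      qed
      ultimately have "- (384/100) \<le> real n * ln (1-p)" "(1-p)^n = exp (real n * ln (1-p))" by linarith+
      hence "exp (- (384/100)) \<le> (1-p)^n" by (simp only: exp_le_cancel_iff)
      moreover have "3/160 \<le> exp (- (384/100::real))"
        using exp_384 by (simp add: exp_minus field_simps)
      ultimately show ?thesis by linarith
    qed
    ultimately show ?thesis unfolding P by linarith
  next
    case False
    hence mu2: "\<mu> \<ge> 64/25" by simp
    have s85: "s \<ge> 8/5"
    proof -
      have h8: "(8/5)^2 \<le> s^2" unfolding s2 using mu2 by (simp add: power_divide)
      have "0 \<le> s" using s1 by linarith
      thus ?thesis using power2_le_imp_le[OF h8] by blast
    qed
    define q where "q = 1 - p"
    have q: "3/4 \<le> q" "q \<le> 1" "q > 0" unfolding q_def using assms(3) p0 by linarith+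
    define v where "v = real n * p * (1-p)"
    have v_eq: "v = s^2 * q" unfolding s2 v_def q_def \<mu>_def by simp
    have v0: "v > 0" using rn p0 p1 by (simp add: v_def)
    define K where "K = nat \<lfloor>\<mu>\<rfloor>"
    have fzK: "\<lfloor>\<mu>\<rfloor> \<ge> 0" using mu1 by simp
    have Kr: "real K = real_of_int \<lfloor>\<mu>\<rfloor>" unfolding K_def using fzK by simp
    have K1: "real K \<le> \<mu>" "\<mu> < real K + 1" unfolding Kr
      by (rule of_int_floor_le, rule real_of_int_floor_add_one_gt)
    have Kn: "K < n"
    proof -
      have "real K < real n" using K1 mun rn by linarith
      thus ?thesis by simp
    qed
    have mK: "m \<le> K"
    proof -
      have "real m < real K + 1" using m1 K1 s1 unfolding thr_def by linarith
      thus ?thesis by simp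
    qed
    have A: "(\<Sum>k\<le>n. \<bar>real n * p - real k\<bar> * bp n p k) = 2 * SS n p K"
      using p0 p1 K1 Kn by (intro abs_sum) (auto simp: \<mu>_def)
    have SK: "v / sqrt (3* v+1) / 2 \<le> SS n p K"
    proof -
      have h2: "v / sqrt (3 * v + 1) \<le> 2 * SS n p K"
        using abs_moment_lb[of p n] p0 p1 unfolding A v_def by simp
      show ?thesis using divide_right_mono[OF h2, of 2] by simp
    qed
    define X where "X = (\<Sum>j=Suc m..K. (real n * p - real j) / (real j * (1-p)))"
    have SP: "SS n p K \<le> SS n p m * exp X"
      unfolding X_def using p0 p1 mK Kn by (intro SS_prod) auto
    define Xb where "Xb = (s/2 + 1/2)^2 / 2 / ((\<mu> - s/2) * q)"
    have thrpos: "\<mu> - s/2 > 0" using thr0 s1 unfolding thr_def by linarith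
    have XXb: "X \<le> Xb"
    proof -
      have "X \<le> (\<Sum>j=Suc m..K. (\<mu> - real j) / ((\<mu> - s/2) * q))"
        unfolding X_def
      proof (intro sum_mono)
        fix j assume j: "j \<in> {Suc m..K}"
        have a: "\<mu> - real j \<ge> 0" using j K1 by auto
        have b: "real j \<ge> \<mu> - s/2"
        proof -
          have "real j \<ge> real m + 1" using j by auto
          thus ?thesis using m2 unfolding thr_def by linarith
        qed
        have "(\<mu> - real j) / (real j * q) \<le> (\<mu> - real j) / ((\<mu> - s/2) * q)"
          using a b thrpos q by (intro divide_left_mono mult_right_mono mult_pos_pos) auto
        thus "(real n * p - real j) / (real j * (1-p)) \<le> (\<mu> - real j) / ((\<mu> - s/2) * q)"
          by (simp add: \<mu>_def q_def)
      qed
      also have "\<dots> = (\<Sum>j=Suc m..K. (\<mu> - real j)) / ((\<mu> - s/2) * q)"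
        by (simp add: sum_divide_distrib)
      also have "\<dots> \<le> ((s/2 + 1/2)^2 / 2) / ((\<mu> - s/2) * q)"
      proof (intro divide_right_mono)
        show "(\<Sum>j=Suc m..K. (\<mu> - real j)) \<le> (s/2 + 1/2)^2 / 2"
          unfolding arith_sum[OF mK]
          using m1 m2 K1 s1 by (intro arith_bound) (auto simp: thr_def)
        show "0 \<le> (\<mu> - s/2) * q" using thrpos q by simp
      qed
      finally show ?thesis by (simp add: Xb_def)
    qed
    have Sm_pos: "SS n p m > 0"
    proof -
      have "SS n p m = real (Suc m) * (1-p) * bp n p (Suc m)" using SS_id[OF mn] .
      moreover have "bp n p (Suc m) > 0" using p0 p1 mn by (intro bp_pos) auto
      ultimately show ?thesis using p1 by simp
    qed
    have lb: "v / sqrt (3* v+1) / 2 * exp (- Xb) \<le> SS n p m"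
    proof -
      have "v / sqrt (3* v+1) / 2 \<le> SS n p m * exp X" using SK SP by linarith
      also have "\<dots> \<le> SS n p m * exp Xb" using XXb Sm_pos by (intro mult_left_mono) auto
      finally have "v / sqrt (3* v+1) / 2 * exp (- Xb) \<le> SS n p m * exp Xb * exp (- Xb)"
        by (intro mult_right_mono) auto
      also have "\<dots> = SS n p m" by (simp add: exp_minus)
      finally show ?thesis .
    qed
    have lb0: "0 \<le> v / sqrt (3* v+1) / 2 * exp (- Xb)" using v0 by simp
    have cs: "SS n p m ^ 2 \<le> v * (\<Sum>k\<le>m. bp n p k)"
      unfolding v_def using p0 p1 n1 mn Sm_pos by (intro cs_step) auto
    have "(v / sqrt (3* v+1) / 2 * exp (- Xb))^2 \<le> SS n p m ^ 2"
      using lb lb0 by (intro power_mono) auto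
    also have "(v / sqrt (3* v+1) / 2 * exp (- Xb))^2 = v * (v / (4*(3* v+1)) * exp (- (2*Xb)))"
    proof -
      have "sqrt (3* v+1)^2 = 3* v+1" using v0 by simp
      hence "(v / sqrt (3* v+1) / 2 * exp (- Xb))^2 = v^2 / (3* v+1) / 4 * exp (-Xb)^2"
        by (simp add: power_mult_distrib power_divide)
      also have "exp (-Xb)^2 = exp (- (2*Xb))" by (simp add: exp_double[symmetric])
      finally show ?thesis by (simp add: power2_eq_square field_simps)
    qed
    finally have "v * (v / (4*(3* v+1)) * exp (- (2*Xb))) \<le> v * (\<Sum>k\<le>m. bp n p k)"
      using cs by linarith
    hence main: "v / (4*(3* v+1)) * exp (- (2*Xb)) \<le> (\<Sum>k\<le>m. bp n p k)"
      by (simp only: mult_le_cancel_left_pos[OF v0])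
    have "2 * Xb = (s/2 + 1/2)^2 / ((s^2 - s/2) * q)" by (simp add: Xb_def s2)
    hence "3/160 \<le> v / (4*(3* v+1)) * exp (- (2*Xb))"
      unfolding v_eq using final_num[OF s85 q(1) q(2) exp_129] by simp
    thus ?thesis unfolding P using main by linarith
  qed
qed


end
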